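(* Let $\mathcal{U}=(u_1,\dots,u_n)$ be a complex projective 2-design consisting of $n$ unit-norm vectors in $\mathbb{C}^d$. For $1\le s\le n$, let $\xi_1,\dots,\xi_n$ be iid $\textsc{bernoulli}(s/n)$ random variables and form the random subsystem $\mathcal{U}'=(u_i:\xi_i=1)$. Let $\delta\in(0,1)$. If \[ s\ge 4\big[\sqrt d+\sqrt{\log(d/\delta)}\big]^2, \] then $\mathcal{U}'$ spans $\mathbb{C}^d$ with probability at least $1-\delta$.
   Context: A system $(u_1,\dots,u_n)$ of unit vectors in $\mathbb{C}^d$ is a complex projective 2-design if $\frac1n\sum_{i=1}^n|\langle a,u_i\rangle|^4=\mathbb{E}|\langle a,v\rangle|^4$ for every $a\in\mathbb{C}^d$, where $v$ is uniform on the complex unit sphere of $\mathbb{C}^d$; equivalently, $\frac1n\sum_{i=1}^n|\operatorname{Tr}[M u_iu_i^*]|^2=\frac{1}{d(d+1)}\big[\|M\|_F^2+(\operatorname{Tr}M)^2\big]$ for all self-adjoint $M\in\mathbb{C}^{d\times d}$. Here $\langle a,b\rangle=a^*b$. *)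

theory Defs
  imports "HOL-Analysis.Analysis" "HOL-Probability.Probability"
begin

text \<open>Vectors in C^d are complex ^ 'd, d = CARD('d). The system (u_1,...,u_n) is
  u :: nat => complex ^ 'd indexed by {..<n}.  Matrices are complex ^ 'd ^ 'd.\<close>

definition self_adjoint :: "complex ^ 'd ^ 'd \<Rightarrow> bool" where
  "self_adjoint M \<longleftrightarrow> (\<forall>i j. M $ i $ j = cnj (M $ j $ i))"

definition ctrace :: "complex ^ 'd ^ 'd \<Rightarrow> complex" where
  "ctrace M = (\<Sum>i\<in>UNIV. M $ i $ i)"

definition frob_sq :: "complex ^ 'd ^ 'd \<Rightarrow> real" where
  "frob_sq M = (\<Sum>i\<in>UNIV. \<Sum>j\<in>UNIV. (cmod (M $ i $ j))\<^sup>2)"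

definition outer :: "complex ^ 'd \<Rightarrow> complex ^ 'd ^ 'd" where
  "outer u = (\<chi> i j. u $ i * cnj (u $ j))"

text \<open>Complex projective 2-design (trace formulation from the paper's context):
  unit vectors with (1/n) sum |Tr[M u_i u_i^*]|^2 = (||M||_F^2 + (Tr M)^2)/(d(d+1))
  for all self-adjoint M.\<close>
definition proj_2design :: "nat \<Rightarrow> (nat \<Rightarrow> complex ^ 'd) \<Rightarrow> bool" where
  "proj_2design n u \<longleftrightarrow> n \<ge> 1 \<and> (\<forall>i<n. norm (u i) = 1) \<and>
     (\<forall>M :: complex ^ 'd ^ 'd. self_adjoint M \<longrightarrow>
        (1 / real n) * (\<Sum>i<n. (cmod (ctrace (M ** outer (u i))))\<^sup>2)
        = (frob_sq M + (Re (ctrace M))\<^sup>2) / (real CARD('d) * (real CARD('d) + 1)))"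

definition spans_Cd :: "(complex ^ 'd) set \<Rightarrow> bool" where
  "spans_Cd S \<longleftrightarrow> vec.span S = UNIV"

end

theory Submission
  imports Defs
begin
lemma split_step:
  fixes E :: "(nat \<Rightarrow> bool) set"
  assumes "finite J" "i \<notin> J" "0 \<le> p" "p \<le> 1"
  shows "measure_pmf.prob (Pi_pmf (insert i J) False (\<lambda>_. bernoulli_pmf p)) E =
     p * measure_pmf.prob (Pi_pmf J False (\<lambda>_. bernoulli_pmf p)) ((\<lambda>f. f(i:=True)) -` E)
   + (1-p) * measure_pmf.prob (Pi_pmf J False (\<lambda>_. bernoulli_pmf p)) ((\<lambda>f. f(i:=False)) -` E)"
proof -
  let ?Q = "Pi_pmf J False (\<lambda>_. bernoulli_pmf p)"
  have eq: "Pi_pmf (insert i J) False (\<lambda>_. bernoulli_pmf p) = bind_pmf (bernoulli_pmf p) (\<lambda>y. map_pmf (\<lambda>f. f(i:=y)) ?Q)"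
    using assms by (subst Pi_pmf_insert') (auto simp: map_pmf_def)
  have "ennreal (measure_pmf.prob (Pi_pmf (insert i J) False (\<lambda>_. bernoulli_pmf p)) E)
     = emeasure (measure_pmf (Pi_pmf (insert i J) False (\<lambda>_. bernoulli_pmf p))) E"
    by (simp add: measure_pmf.emeasure_eq_measure)
  also have "\<dots> = (\<integral>\<^sup>+y. emeasure (measure_pmf (map_pmf (\<lambda>f. f(i:=y)) ?Q)) E \<partial>measure_pmf (bernoulli_pmf p))"
    by (simp only: eq emeasure_bind_pmf)
  also have "\<dots> = emeasure (measure_pmf (map_pmf (\<lambda>f. f(i:=True)) ?Q)) E * ennreal p
      + emeasure (measure_pmf (map_pmf (\<lambda>f. f(i:=False)) ?Q)) E * ennreal (1-p)"
    using assms by (subst nn_integral_measure_pmf_support[of UNIV]) (auto simp: UNIV_bool field_simps)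
  also have "\<dots> = ennreal (measure_pmf.prob ?Q ((\<lambda>f. f(i:=True)) -` E)) * ennreal p
      + ennreal (measure_pmf.prob ?Q ((\<lambda>f. f(i:=False)) -` E)) * ennreal (1-p)"
    by (simp only: measure_map_pmf measure_pmf.emeasure_eq_measure)
  also have "\<dots> = ennreal (p * measure_pmf.prob ?Q ((\<lambda>f. f(i:=True)) -` E)
   + (1-p) * measure_pmf.prob ?Q ((\<lambda>f. f(i:=False)) -` E))"
    using assms by (simp add: ennreal_mult' ennreal_plus mult.commute)
  finally show ?thesis using assms by (subst (asm) ennreal_inj) auto
qed

lemma setT: "I = insert i J \<Longrightarrow> i \<notin> J \<Longrightarrow> {(u::nat\<Rightarrow>'a) j | j. j \<in> I \<and> (f(i:=True)) j} = insert (u i) {u j | j. j \<in> J \<and> f j}"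
  apply (rule set_eqI) apply (rule iffI) apply auto[1] apply (metis fun_upd_other) apply auto done
lemma setF: "I = insert i J \<Longrightarrow> i \<notin> J \<Longrightarrow> {(u::nat\<Rightarrow>'a) j | j. j \<in> I \<and> (f(i:=False)) j} = {u j | j. j \<in> J \<and> f j}"
  apply (rule set_eqI) apply (rule iffI) apply auto[1] apply (metis fun_upd_other) 
  apply clarsimp apply (rule_tac x=j in exI) apply auto done

lemma main_ind:
  fixes u :: "nat \<Rightarrow> complex ^ 'd" and p :: real
  assumes p: "0 \<le> p" "p \<le> 1"
  shows "finite I \<Longrightarrow> CARD('d) \<le> vec.dim W + c \<Longrightarrow>
    (\<forall>V. vec.span V \<noteq> UNIV \<longrightarrow> W \<subseteq> vec.span V \<longrightarrow> m \<le> card {i\<in>I. u i \<notin> vec.span V}) \<Longrightarrow>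
    measure_pmf.prob (Pi_pmf I False (\<lambda>_. bernoulli_pmf p))
      {\<xi>. vec.span (W \<union> {u i | i. i \<in> I \<and> \<xi> i}) \<noteq> UNIV} \<le> 2^c * (1 - p/2)^m"
proof (induction "card I" arbitrary: I W m c rule: less_induct)
  case less
  have b0: "0 \<le> 1 - p/2" "1 - p/2 \<le> 1" using p by auto
  show ?case
  proof (cases "\<exists>i\<in>I. u i \<notin> vec.span W")
    case True
    then obtain i where i: "i \<in> I" "u i \<notin> vec.span W" by blast
    define J where "J = I - {i}"
    have IJ: "I = insert i J" "i \<notin> J" "finite J" using i less.prems(1) by (auto simp: J_def)
    have cardJ: "card J < card I" using i less.prems(1) unfolding J_def by (meson card_Diff1_less)
    have c1: "c \<ge> 1"
    proof (rule ccontr)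
      assume "\<not> c \<ge> 1"
      then have "vec.dim W = CARD('d)" using less.prems(2) dim_subset_UNIV_cart_gen[of W] by simp
      then have "vec.span W = UNIV" using vec.dim_eq_full[of W] by (simp add: vec.dimension_def card_cart_basis)
      then show False using i by simp
    qed
    let ?Q = "Pi_pmf J False (\<lambda>_. bernoulli_pmf p)"
    let ?EA = "{\<xi>. vec.span (W \<union> {u i | i. i \<in> I \<and> \<xi> i}) \<noteq> UNIV}"
    let ?ET = "{\<xi>. vec.span (insert (u i) W \<union> {u j | j. j \<in> J \<and> \<xi> j}) \<noteq> UNIV}"
    let ?EF = "{\<xi>. vec.span (W \<union> {u j | j. j \<in> J \<and> \<xi> j}) \<noteq> UNIV}"
    have pre1: "(\<lambda>f. f(i:=True)) -` ?EA = ?ET"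
    proof (intro set_eqI)
      fix f :: "nat \<Rightarrow> bool"
      have "W \<union> {u j | j. j \<in> I \<and> (f(i:=True)) j} = insert (u i) W \<union> {u j | j. j \<in> J \<and> f j}"
        using setT[OF IJ(1,2), of u f] by auto
      then show "f \<in> (\<lambda>f. f(i:=True)) -` ?EA \<longleftrightarrow> f \<in> ?ET" unfolding vimage_eq mem_Collect_eq by (rule arg_cong[where f="\<lambda>X. vec.span X \<noteq> UNIV"])
    qed
    have pre0: "(\<lambda>f. f(i:=False)) -` ?EA = ?EF"
    proof (intro set_eqI)
      fix f :: "nat \<Rightarrow> bool"
      have "W \<union> {u j | j. j \<in> I \<and> (f(i:=False)) j} = W \<union> {u j | j. j \<in> J \<and> f j}"
        using setF[OF IJ(1,2), of u f] by auto
      then show "f \<in> (\<lambda>f. f(i:=False)) -` ?EA \<longleftrightarrow> f \<in> ?EF" unfolding vimage_eq mem_Collect_eq by (rule arg_cong[where f="\<lambda>X. vec.span X \<noteq> UNIV"])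
    qed
    have P1: "measure_pmf.prob ?Q ?ET \<le> 2^(c-1) * (1 - p/2)^(m-1)"
    proof (rule less.hyps[OF cardJ IJ(3)])
      show "CARD('d) \<le> vec.dim (insert (u i) W) + (c - 1)"
        using less.prems(2) c1 i by (simp add: vec.dim_insert)
      show "\<forall>V. vec.span V \<noteq> UNIV \<longrightarrow> insert (u i) W \<subseteq> vec.span V \<longrightarrow>
           m - 1 \<le> card {j \<in> J. u j \<notin> vec.span V}"
      proof (intro allI impI)
        fix V assume V: "vec.span V \<noteq> UNIV" "insert (u i) W \<subseteq> vec.span V"
        have "m \<le> card {j \<in> I. u j \<notin> vec.span V}" using less.prems(3) V by auto
        also have "{j \<in> I. u j \<notin> vec.span V} = {j \<in> J. u j \<notin> vec.span V}"
          using V IJ by auto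
        finally show "m - 1 \<le> card {j \<in> J. u j \<notin> vec.span V}" by simp
      qed
    qed
    have P0: "measure_pmf.prob ?Q ?EF \<le> 2^c * (1 - p/2)^(m-1)"
    proof (rule less.hyps[OF cardJ IJ(3)])
      show "CARD('d) \<le> vec.dim W + c" using less.prems(2) .
      show "\<forall>V. vec.span V \<noteq> UNIV \<longrightarrow> W \<subseteq> vec.span V \<longrightarrow>
           m - 1 \<le> card {j \<in> J. u j \<notin> vec.span V}"
      proof (intro allI impI)
        fix V assume V: "vec.span V \<noteq> UNIV" "W \<subseteq> vec.span V"
        have "m \<le> card {j \<in> I. u j \<notin> vec.span V}" using less.prems(3) V by auto
        also have "{j \<in> I. u j \<notin> vec.span V} \<subseteq> insert i {j \<in> J. u j \<notin> vec.span V}"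
          using IJ by auto
        then have "card {j \<in> I. u j \<notin> vec.span V} \<le> card (insert i {j \<in> J. u j \<notin> vec.span V})"
          using IJ by (intro card_mono) auto
        also have "\<dots> \<le> card {j \<in> J. u j \<notin> vec.span V} + 1"
          by (simp add: card_insert_le_m1)
        finally show "m - 1 \<le> card {j \<in> J. u j \<notin> vec.span V}" by simp
      qed
    qed
    have "measure_pmf.prob (Pi_pmf I False (\<lambda>_. bernoulli_pmf p)) ?EA
       = p * measure_pmf.prob ?Q ?ET + (1-p) * measure_pmf.prob ?Q ?EF"
      using split_step[OF IJ(3) IJ(2) p, of ?EA] unfolding IJ(1)[symmetric] pre1 pre0 .
    also have "\<dots> \<le> p * (2^(c-1) * (1 - p/2)^(m-1)) + (1-p) * (2^c * (1 - p/2)^(m-1))"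
      using P1 P0 p by (intro add_mono mult_left_mono) auto
    also have "\<dots> = 2^c * (1 - p/2)^(m-1) * (1 - p/2)"
    proof -
      obtain k where k: "c = Suc k" using c1 by (cases c) auto
      show ?thesis unfolding k by (simp add: algebra_simps)
    qed
    also have "\<dots> \<le> 2^c * (1 - p/2)^m"
    proof (cases m)
      case 0 then show ?thesis using b0 by simp
    next
      case (Suc k) then show ?thesis by simp
    qed
    finally show ?thesis .
  next
    case False
    have eqS: "\<And>\<xi>. vec.span (W \<union> {u i | i. i \<in> I \<and> \<xi> i}) = vec.span W"
    proof -
      fix \<xi>
      have "W \<union> {u i | i. i \<in> I \<and> \<xi> i} \<subseteq> vec.span W" using False vec.span_superset by blast
      then show "vec.span (W \<union> {u i | i. i \<in> I \<and> \<xi> i}) = vec.span W"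
        apply (subst vec.span_eq) using vec.span_superset[of "W \<union> {u i | i. i \<in> I \<and> \<xi> i}"] by blast
    qed
    show ?thesis
    proof (cases "vec.span W = UNIV")
      case True
      then show ?thesis using eqS b0 by simp
    next
      case nf: False
      have "m \<le> card {i\<in>I. u i \<notin> vec.span W}" using less.prems(3) nf vec.span_superset by blast
      also have "{i\<in>I. u i \<notin> vec.span W} = {}" using False by auto
      finally have "m = 0" by simp
      then have "1 \<le> 2^c * (1 - p/2)^m" by simp
      then show ?thesis using measure_pmf.prob_le_1 order_trans by blast
    qed
  qed
qed

definition hip :: "complex ^ 'd \<Rightarrow> complex ^ 'd \<Rightarrow> complex" where
  "hip a v = (\<Sum>k\<in>UNIV. cnj (a $ k) * v $ k)"

lemma exists_annihilator:
  fixes V :: "(complex ^ 'd) set"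
  assumes "vec.span V \<noteq> UNIV"
  shows "\<exists>a::complex^'d. a \<noteq> 0 \<and> (\<forall>v\<in>vec.span V. hip a v = 0)"
proof -
  obtain c where c: "c \<notin> vec.span V" using assms by auto
  obtain B where B: "B \<subseteq> V" "vec.independent B" "V \<subseteq> vec.span B"
    using vec.maximal_independent_subset[of V] by blast
  have spanB: "vec.span B = vec.span V"
    using B by (simp add: vec.span_eq vec.span_superset subset_trans[OF B(1) vec.span_superset])
  have cB: "c \<notin> B" using c B(1) vec.span_superset by blast
  have ind: "vec.independent (insert c B)"
    using vec.independent_insert[of c B] cB B(2) c spanB by simp
  interpret vp: vector_space_pair "(*s) :: complex \<Rightarrow> complex^'d \<Rightarrow> _" "(*) :: complex \<Rightarrow> complex \<Rightarrow> complex"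
    by unfold_locales
  obtain g where g: "Vector_Spaces.linear (*s) (*) g" "\<forall>x\<in>insert c B. g x = (if x = c then 1 else 0)"
    using vp.linear_independent_extend[OF ind, of "\<lambda>x. if x = c then 1 else 0"] by blast
  interpret lg: Vector_Spaces.linear "(*s)" "(*)" g by (rule g(1))
  have g0: "g v = 0" if "v \<in> vec.span V" for v
  proof -
    have "v \<in> vec.span B" using that spanB by simp
    moreover have "\<forall>x\<in>B. g x = 0" using g(2) cB by auto
    ultimately show ?thesis using lg.eq_0_on_span by blast
  qed
  have gexp: "g x = (\<Sum>j\<in>UNIV. x $ j * g (axis j 1))" for x
  proof -
    have "g x = g (\<Sum>j\<in>UNIV. x $ j *s axis j 1)" by (simp add: basis_expansion)
    also have "\<dots> = (\<Sum>j\<in>UNIV. x $ j * g (axis j 1))" by (simp add: lg.sum lg.scale)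
    finally show ?thesis .
  qed
  define a :: "complex^'d" where "a = (\<chi> j. cnj (g (axis j 1)))"
  have ha: "hip a v = g v" for v
    unfolding hip_def a_def gexp[of v] by (simp add: mult.commute)
  have "a \<noteq> 0"
  proof
    assume "a = 0"
    then have "g c = 0" using ha[of c] by (simp add: hip_def)
    then show False using g(2) by simp
  qed
  then show ?thesis using ha g0 by auto
qed

lemma norm_sq_vec: "(norm (v::complex^'d))\<^sup>2 = (\<Sum>i\<in>UNIV. (cmod (v $ i))\<^sup>2)"
  unfolding norm_vec_def L2_set_def by (simp add: sum_nonneg)

lemma ctrace_outer_outer:
  "ctrace (outer a ** outer v) = complex_of_real ((cmod (hip a v))\<^sup>2)"
proof -
  have "ctrace (outer a ** outer v) = (\<Sum>i\<in>UNIV. \<Sum>k\<in>UNIV. (a$i * cnj (a$k)) * (v$k * cnj (v$i)))"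
    by (simp add: ctrace_def matrix_matrix_mult_def outer_def)
  also have "\<dots> = hip a v * cnj (hip a v)"
    unfolding hip_def by (simp add: sum_product sum_distrib_left sum_distrib_right mult_ac) (rule sum.swap)
  also have "\<dots> = complex_of_real ((cmod (hip a v))\<^sup>2)" by (rule complex_norm_square[symmetric])
  finally show ?thesis .
qed

lemma ctrace_outer: "ctrace (outer v) = complex_of_real ((norm v)\<^sup>2)"
proof -
  have "ctrace (outer v) = (\<Sum>i\<in>UNIV. v$i * cnj (v$i))" by (simp add: ctrace_def outer_def)
  also have "\<dots> = (\<Sum>i\<in>UNIV. complex_of_real ((cmod (v$i))\<^sup>2))" by (simp only: complex_norm_square)
  also have "\<dots> = complex_of_real ((norm v)\<^sup>2)" by (simp only: norm_sq_vec of_real_sum)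
  finally show ?thesis .
qed

lemma ctrace_add: "ctrace (A + B) = ctrace A + ctrace B"
  by (simp add: ctrace_def sum.distrib)

lemma ctrace_I_outer: "ctrace ((mat 1 + outer a) ** outer v) = ctrace (outer v) + ctrace (outer a ** outer v)"
proof -
  have "(mat 1 + outer a) ** outer v = mat 1 ** outer v + outer a ** outer v"
    by (simp add: matrix_matrix_mult_def vec_eq_iff sum.distrib distrib_right)
  then have "(mat 1 + outer a) ** outer v = outer v + outer a ** outer v" by simp
  then show ?thesis by (simp add: ctrace_add)
qed

lemma sa_outer: "self_adjoint (outer a)"
  by (simp add: self_adjoint_def outer_def)

lemma sa_I_outer: "self_adjoint (mat 1 + outer a)"
  by (simp add: self_adjoint_def outer_def mat_def)

definition nsq :: "complex^'d \<Rightarrow> real" where "nsq a = (\<Sum>i\<in>UNIV. (cmod (a$i))\<^sup>2)"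

lemma frob_outer: "frob_sq (outer a) = (nsq a)\<^sup>2"
  by (simp add: frob_sq_def outer_def nsq_def norm_mult power2_eq_square sum_product mult_ac)

lemma re_ctrace_outer: "Re (ctrace (outer a)) = nsq a"
  by (simp add: ctrace_outer norm_sq_vec nsq_def)

lemma re_diag: "Re (z * cnj z) = (cmod z)\<^sup>2"
  by (simp only: complex_norm_square[symmetric] Re_complex_of_real)

lemma re_im_sq: "Re z * Re z + Im z * Im z = (cmod z)\<^sup>2"
  using cmod_power2[of z] by (simp add: power2_eq_square)

lemma re_ctrace_I_outer: "Re (ctrace (mat 1 + outer (a::complex^'d))) = real CARD('d) + nsq a"
  by (simp add: ctrace_def mat_def outer_def sum.distrib nsq_def re_im_sq)

lemma frob_I_outer: "frob_sq (mat 1 + outer (a::complex^'d)) = real CARD('d) + 2 * nsq a + (nsq a)\<^sup>2"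
proof -
  have pt: "(cmod ((mat 1 + outer a) $ i $ j))\<^sup>2 =
      (cmod (a$i))\<^sup>2 * (cmod (a$j))\<^sup>2 + (if j = i then 1 + 2 * (cmod (a$i))\<^sup>2 else 0)" for i j
  proof (cases "j = i")
    case True
    have "(mat 1 + outer a) $ i $ j = complex_of_real (1 + (cmod (a$i))\<^sup>2)"
      using True by (simp add: mat_def outer_def flip: complex_norm_square)
    then have "cmod ((mat 1 + outer a) $ i $ j) = 1 + (cmod (a$i))\<^sup>2"
      by (simp only: norm_of_real) simp
    then have "(cmod ((mat 1 + outer a) $ i $ j))\<^sup>2 = (1 + (cmod (a$i))\<^sup>2)\<^sup>2"
      by simp
    then show ?thesis using True by (simp add: power2_eq_square algebra_simps)
  next
    case False
    then show ?thesis by (simp add: mat_def outer_def norm_mult power_mult_distrib)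
  qed
  have "frob_sq (mat 1 + outer a) = (\<Sum>i\<in>UNIV. \<Sum>j\<in>UNIV.
      (cmod (a$i))\<^sup>2 * (cmod (a$j))\<^sup>2 + (if j = i then 1 + 2 * (cmod (a$i))\<^sup>2 else 0))"
    unfolding frob_sq_def pt ..
  also have "\<dots> = (\<Sum>i\<in>UNIV. \<Sum>j\<in>UNIV. (cmod (a$i))\<^sup>2 * (cmod (a$j))\<^sup>2) + (\<Sum>i\<in>UNIV. (1 + 2 * (cmod (a$i))\<^sup>2))"
    by (simp add: sum.distrib)
  also have "\<dots> = (nsq a)\<^sup>2 + real CARD('d) + 2 * nsq a"
  proof -
    have "(\<Sum>i\<in>UNIV. \<Sum>j\<in>UNIV. (cmod (a$i))\<^sup>2 * (cmod (a$j))\<^sup>2) = (nsq a)\<^sup>2"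
      unfolding nsq_def by (simp only: power2_eq_square[of "sum _ _"] sum_product)
    moreover have "(\<Sum>i\<in>UNIV. (1 + 2 * (cmod (a$i))\<^sup>2)) = real CARD('d) + 2 * nsq a"
      by (simp add: nsq_def sum.distrib sum_distrib_left)
    ultimately show ?thesis by simp
  qed
  finally show ?thesis by simp
qed

lemma nsq_pos: "a \<noteq> 0 \<Longrightarrow> 0 < nsq (a::complex^'d)"
proof -
  assume "a \<noteq> 0"
  then obtain i where "a $ i \<noteq> 0" by (metis vec_eq_iff zero_index)
  then have "0 < (cmod (a$i))\<^sup>2" by simp
  also have "\<dots> \<le> nsq a" unfolding nsq_def by (rule member_le_sum) auto
  finally show ?thesis .
qed

lemma design_card:
  fixes u :: "nat \<Rightarrow> complex ^ 'd" and a :: "complex ^ 'd"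
  assumes des: "proj_2design n u" and a: "a \<noteq> 0"
  shows "real n \<le> 2 * real (card {i\<in>{..<n}. hip a (u i) \<noteq> 0})"
proof -
  define g where "g i = (cmod (hip a (u i)))\<^sup>2" for i
  define N where "N = nsq a"
  define d where "d = real CARD('d)"
  define K where "K = card {i\<in>{..<n}. hip a (u i) \<noteq> 0}"
  have N: "N > 0" using nsq_pos[OF a] N_def by simp
  have d: "d \<ge> 1" unfolding d_def by simp
  have n: "n \<ge> 1" and un: "\<And>i. i < n \<Longrightarrow> norm (u i) = 1"
    and D: "\<And>M :: complex ^ 'd ^ 'd. self_adjoint M \<Longrightarrow>
        (1 / real n) * (\<Sum>i<n. (cmod (ctrace (M ** outer (u i))))\<^sup>2)
        = (frob_sq M + (Re (ctrace M))\<^sup>2) / (real CARD('d) * (real CARD('d) + 1))"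
    using des unfolding proj_2design_def by auto
  have g0: "g i \<ge> 0" for i unfolding g_def by simp
  have e1: "(1 / real n) * (\<Sum>i<n. (g i)\<^sup>2) = (N\<^sup>2 + N\<^sup>2) / (d * (d + 1))"
  proof -
    have "(cmod (ctrace (outer a ** outer (u i))))\<^sup>2 = (g i)\<^sup>2" for i
      unfolding ctrace_outer_outer g_def by (simp only: norm_of_real) simp
    then show ?thesis using D[OF sa_outer[of a]] by (simp add: frob_outer re_ctrace_outer N_def d_def)
  qed
  have e2: "(1 / real n) * (\<Sum>i<n. (1 + g i)\<^sup>2) = (d + 2 * N + N\<^sup>2 + (d + N)\<^sup>2) / (d * (d + 1))"
  proof -
    have "(cmod (ctrace ((mat 1 + outer a) ** outer (u i))))\<^sup>2 = (1 + g i)\<^sup>2" if "i < n" for i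
    proof -
      have "ctrace ((mat 1 + outer a) ** outer (u i)) = complex_of_real (1 + g i)"
        unfolding ctrace_I_outer ctrace_outer ctrace_outer_outer g_def using un[OF that] by simp
      then show ?thesis by (simp only: norm_of_real power2_abs)
    qed
    then have "(\<Sum>i<n. (cmod (ctrace ((mat 1 + outer a) ** outer (u i))))\<^sup>2) = (\<Sum>i<n. (1 + g i)\<^sup>2)"
      by (intro sum.cong) auto
    then show ?thesis using D[OF sa_I_outer[of a]] by (simp add: frob_I_outer re_ctrace_I_outer N_def d_def)
  qed
  define S1 where "S1 = (\<Sum>i<n. g i)"
  define S2 where "S2 = (\<Sum>i<n. (g i)\<^sup>2)"
  have nr: "real n > 0" using n by simp
  have dd: "d * (d + 1) > 0" using d by simp
  have E2: "S2 = real n * (2 * N\<^sup>2) / (d * (d + 1))"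
    using e1 nr unfolding S2_def by (simp add: field_simps)
  have sq: "(\<Sum>i<n. (1 + g i)\<^sup>2) = real n + 2 * S1 + S2"
    unfolding S1_def S2_def by (simp add: power2_eq_square algebra_simps sum.distrib sum_distrib_left)
  have E1: "real n + 2 * S1 + S2 = real n * (d + 2 * N + N\<^sup>2 + (d + N)\<^sup>2) / (d * (d + 1))"
    using e2 nr unfolding sq by (simp add: field_simps)
  have S1: "S1 = real n * N / d"
  proof -
    define Q where "Q = d * (d + 1)"
    have Q: "Q > 0" using dd Q_def by simp
    have num: "real n * (d + 2 * N + N\<^sup>2 + (d + N)\<^sup>2) - real n * Q - real n * (2 * N\<^sup>2) = real n * (2 * N * (d + 1))"
      unfolding Q_def by (simp add: power2_eq_square algebra_simps)
    have "2 * S1 = real n * (d + 2 * N + N\<^sup>2 + (d + N)\<^sup>2) / Q - real n - real n * (2 * N\<^sup>2) / Q"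
      using E1 unfolding E2[symmetric] Q_def by (simp add: algebra_simps)
    also have "\<dots> = real n * (d + 2 * N + N\<^sup>2 + (d + N)\<^sup>2) / Q - real n * Q / Q - real n * (2 * N\<^sup>2) / Q"
      using Q by simp
    also have "\<dots> = (real n * (d + 2 * N + N\<^sup>2 + (d + N)\<^sup>2) - real n * Q - real n * (2 * N\<^sup>2)) / Q"
      by (simp add: diff_divide_distrib)
    also have "\<dots> = real n * (2 * N * (d + 1)) / Q" unfolding num ..
    also have "\<dots> = ((2 * real n * N) * (d + 1)) / (d * (d + 1))"
      unfolding Q_def by (simp add: mult_ac)
    also have "\<dots> = (2 * real n * N) / d"
      using d by (intro nonzero_mult_divide_mult_cancel_right) simp
    also have "\<dots> = 2 * (real n * N / d)" by simp
    finally show ?thesis by simp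
  qed
  define A where "A = {i\<in>{..<n}. hip a (u i) \<noteq> 0}"
  have Asub: "A \<subseteq> {..<n}" unfolding A_def by auto
  have gz: "i \<in> {..<n} - A \<Longrightarrow> g i = 0" for i unfolding A_def g_def by auto
  have S1A: "S1 = (\<Sum>i\<in>A. g i)"
    unfolding S1_def using gz Asub
    by (intro sum.mono_neutral_right) auto
  have S2A: "S2 = (\<Sum>i\<in>A. (g i)\<^sup>2)"
    unfolding S2_def using gz Asub
    by (intro sum.mono_neutral_right) auto
  have CS: "S1\<^sup>2 \<le> S2 * real K"
    unfolding S1A S2A K_def A_def[symmetric] by (rule sum_squared_le_sum_of_squares)
  then have "(real n * N / d)\<^sup>2 \<le> real n * (2 * N\<^sup>2) / (d * (d + 1)) * real K"
    using S1 E2 by simp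
  then have "(real n)\<^sup>2 * N\<^sup>2 * (d * (d + 1)) \<le> real n * (2 * N\<^sup>2) * real K * d\<^sup>2"
    using d dd by (simp add: field_simps power2_eq_square)
  then have "(real n * N\<^sup>2 * d) * (real n * (d + 1)) \<le> (real n * N\<^sup>2 * d) * (2 * real K * d)"
    by (simp add: power2_eq_square algebra_simps)
  then have "real n * (d + 1) \<le> 2 * real K * d"
    using nr N d by (subst (asm) mult_le_cancel_left_pos) auto
  then have "real n * d \<le> 2 * real K * d" using nr by (smt (verit) distrib_left mult_cancel_left1)
  then show ?thesis unfolding K_def using d by simp
qed

lemma final_numeric:
  fixes d s \<delta> :: real
  assumes d: "d \<ge> 1" and delta: "0 < \<delta>" "\<delta> < 1"
    and s: "s \<ge> 4 * (sqrt d + sqrt (ln (d / \<delta>)))\<^sup>2"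
  shows "2 powr d * exp (- s / 4) \<le> \<delta>"
proof -
  define L where "L = ln (d / \<delta>)"
  have L: "L = ln d - ln \<delta>" unfolding L_def using d delta by (simp add: ln_div)
  have lnd: "ln d \<ge> 0" using d by simp
  have "ln \<delta> < 0" using delta by simp
  then have L0: "L \<ge> 0" using L lnd by simp
  have "(sqrt d + sqrt L)\<^sup>2 = d + L + 2 * sqrt d * sqrt L"
    using d L0 by (simp add: power2_eq_square algebra_simps)
  also have "\<dots> \<ge> d + L" using d L0 by simp
  finally have "s / 4 \<ge> d + L" using s unfolding L_def by simp
  then have "s / 4 \<ge> d * ln 2 - ln \<delta>" using L lnd ln_2_less_1 d by (smt (verit) mult_left_le)
  then have "d * ln 2 - s / 4 \<le> ln \<delta>" by simp
  then have "exp (d * ln 2 - s / 4) \<le> exp (ln \<delta>)" by simp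
  also have "exp (ln \<delta>) = \<delta>" using delta by simp
  also have "exp (d * ln 2 - s / 4) = 2 powr d * exp (- s / 4)"
  proof -
    have "exp (d * ln 2 - s / 4) = exp (d * ln 2) * exp (- s / 4)"
      by (simp add: exp_add[symmetric])
    moreover have "exp (d * ln 2) = 2 powr d" by (simp add: powr_def mult.commute)
    ultimately show ?thesis by simp
  qed
  finally show ?thesis .
qed

theorem theorem4p2:
  fixes u :: "nat \<Rightarrow> complex ^ 'd" and n :: nat and s \<delta> :: real
  assumes design: "proj_2design n u"
    and s_range: "1 \<le> s" "s \<le> real n"
    and delta: "0 < \<delta>" "\<delta> < 1"
    and s_big: "s \<ge> 4 * (sqrt (real CARD('d)) + sqrt (ln (real CARD('d) / \<delta>)))\<^sup>2"
  shows "measure_pmf.prob (Pi_pmf {..<n} False (\<lambda>_. bernoulli_pmf (s / real n)))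
           {\<xi>. spans_Cd {u i | i. i < n \<and> \<xi> i}} \<ge> 1 - \<delta>"
proof -
  define p where "p = s / real n"
  define d where "d = CARD('d)"
  define m where "m = nat \<lceil>real n / 2\<rceil>"
  have n: "real n > 0" using s_range by simp
  have p: "0 \<le> p" "p \<le> 1" using s_range n unfolding p_def by auto
  let ?P = "Pi_pmf {..<n} False (\<lambda>_. bernoulli_pmf p)"
  let ?F = "{\<xi>. vec.span ({} \<union> {u i | i. i \<in> {..<n} \<and> \<xi> i}) \<noteq> UNIV}"
  have hyp: "\<forall>V. vec.span V \<noteq> UNIV \<longrightarrow> {} \<subseteq> vec.span V \<longrightarrow> m \<le> card {i\<in>{..<n}. u i \<notin> vec.span V}"
  proof (intro allI impI)
    fix V :: "(complex^'d) set"
    assume V: "vec.span V \<noteq> UNIV"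
    obtain a where a: "a \<noteq> 0" "\<forall>v\<in>vec.span V. hip a v = 0"
      using exists_annihilator[OF V] by blast
    have sub: "{i\<in>{..<n}. hip a (u i) \<noteq> 0} \<subseteq> {i\<in>{..<n}. u i \<notin> vec.span V}"
      using a(2) by auto
    have "real n \<le> 2 * real (card {i\<in>{..<n}. hip a (u i) \<noteq> 0})"
      by (rule design_card[OF design a(1)])
    also have "card {i\<in>{..<n}. hip a (u i) \<noteq> 0} \<le> card {i\<in>{..<n}. u i \<notin> vec.span V}"
      by (rule card_mono[OF _ sub]) auto
    finally have "real n / 2 \<le> real (card {i\<in>{..<n}. u i \<notin> vec.span V})" by simp
    then show "m \<le> card {i\<in>{..<n}. u i \<notin> vec.span V}"
      unfolding m_def by (simp add: ceiling_le_iff nat_le_iff)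
  qed
  have F: "measure_pmf.prob ?P ?F \<le> 2^d * (1 - p/2)^m"
    by (rule main_ind[OF p]) (use hyp in \<open>auto simp: d_def\<close>)
  have "(1 - p/2)^m \<le> (exp (- p/2))^m"
    using p by (intro power_mono) (use exp_ge_add_one_self[of "-p/2"] in auto)
  also have "\<dots> = exp (- (p * real m) / 2)"
    by (simp add: exp_of_nat_mult[symmetric] algebra_simps)
  also have "\<dots> \<le> exp (- s / 4)"
  proof -
    have "real m \<ge> real n / 2" unfolding m_def by linarith
    then have "p * real m \<ge> p * (real n / 2)" using p by (intro mult_left_mono) auto
    also have "p * (real n / 2) = s / 2" unfolding p_def using n by simp
    finally show ?thesis by simp
  qed
  finally have "measure_pmf.prob ?P ?F \<le> 2^d * exp (- s / 4)"
    using F by (smt (verit) mult_left_mono zero_le_power)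
  also have "(2::real)^d = 2 powr real d" by (simp add: powr_realpow)
  also have "2 powr real d * exp (- s / 4) \<le> \<delta>"
    using final_numeric[of "real d" \<delta> s] s_big delta unfolding d_def by simp
  finally have Fb: "measure_pmf.prob ?P ?F \<le> \<delta>" .
  have "{\<xi>. spans_Cd {u i | i. i < n \<and> \<xi> i}} = UNIV - ?F"
    unfolding spans_Cd_def by auto
  then have "measure_pmf.prob ?P {\<xi>. spans_Cd {u i | i. i < n \<and> \<xi> i}} = 1 - measure_pmf.prob ?P ?F"
    using measure_pmf.prob_compl[of ?F ?P] by simp
  then show ?thesis using Fb unfolding p_def by simp
qed

end
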